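(* Let $n\ge2$, $0<\sigma<\frac1{n+2}$ and $\epsilon_2>0$. For $R>0$ define $$X=\big(R^{\sigma-1}\mathbb{Z}^n+B(0,\tfrac{\epsilon_2}{R})\big)\cap\mathcal{A}_{4^{-n-2},2\sqrt n},\qquad T=(R^{2\sigma-1}\mathbb{Z})\cap(4^{-n-1},1),$$ and $\frac{XR}{T}=\{\frac{xR}{t}:x\in X,\ t\in T\}$. Then there is a constant $c>0$ (independent of $R$) such that whenever $R^\sigma$ is a sufficiently large integer, $$\Big|\frac{XR}{T}\cap B(0,R)\Big|\ge cR^n.$$
   Context: For $0<u<v$, $\mathcal{A}_{u,v}=\{x\in\mathbb{R}^n:u<|x|<v\}$; $B(0,r)$ is the open ball of radius $r$ centered at $0$; $A+B$ is the Minkowski sum; $|\cdot|$ is Lebesgue measure on $\mathbb{R}^n$. *)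

theory Defs
  imports "HOL-Analysis.Analysis"
begin

definition annulus :: "real \<Rightarrow> real \<Rightarrow> ('a::real_normed_vector) set" where
  "annulus u v = {x. u < norm x \<and> norm x < v}"

definition minkowski_sum :: "('a::plus) set \<Rightarrow> 'a set \<Rightarrow> 'a set" where
  "minkowski_sum A B = {a + b | a b. a \<in> A \<and> b \<in> B}"

definition int_lattice :: "(real ^ 'n) set" where
  "int_lattice = {z. \<forall>i. z $ i \<in> \<int>}"

definition setX :: "real \<Rightarrow> real \<Rightarrow> real \<Rightarrow> (real ^ 'n) set" where
  "setX \<sigma> \<epsilon>2 R =
     minkowski_sum ((\<lambda>z. (R powr (\<sigma> - 1)) *\<^sub>R z) ` int_lattice) (ball 0 (\<epsilon>2 / R))
     \<inter> annulus (4 powr (- real CARD('n) - 2)) (2 * sqrt (real CARD('n)))"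

definition setT :: "real \<Rightarrow> real \<Rightarrow> real set" where
  "setT \<sigma> R = {R powr (2 * \<sigma> - 1) * real_of_int k | k. True} \<inter>
                {4 powr (- real CARD('n) - 1) <..< 1}"

end

theory Submission
  imports Defs
begin


lemma pow_le_lin0:
  fixes x :: real assumes "0 \<le> x" "x \<le> 1"
  shows "(1 + x) ^ n \<le> 1 + (2 ^ n - 1) * x"
proof (induction n)
  case 0 then show ?case by simp
next
  case (Suc n)
  have p: "(1::real) \<le> 2 ^ n" by simp
  have "(1 + x) ^ Suc n = (1+x)^n * (1+x)" by simp
  also have "\<dots> \<le> (1 + (2^n - 1)*x) * (1+x)" by (rule mult_right_mono[OF Suc.IH]) (use assms in simp)
  also have "\<dots> = 1 + 2^n*x + (2^n - 1)*(x*x)" by (simp add: algebra_simps)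
  also have "\<dots> \<le> 1 + 2^n*x + (2^n - 1)*x"
    using assms p by (intro add_left_mono mult_left_mono) (auto intro: mult_left_le)
  also have "\<dots> = 1 + (2^Suc n - 1) * x" by (simp add: algebra_simps)
  finally show ?case .
qed

lemma pow_le_lin:
  fixes x :: real assumes "0 \<le> x" "x \<le> 1"
  shows "(1 + x) ^ n \<le> 1 + 2 ^ n * x"
  using pow_le_lin0[OF assms, of n] assms by (simp add: algebra_simps)
lemma dirichlet:
  fixes w :: "real ^ 'n::finite" and Q :: nat
  assumes "Q \<ge> 1"
  shows "\<exists>q::nat. 1 \<le> q \<and> q \<le> Q ^ CARD('n) \<and>
           (\<exists>z::int ^ 'n. \<forall>i. \<bar>real q * w $ i - of_int (z $ i)\<bar> < 1 / real Q)"
proof -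
  define g where "g j = (\<lambda>i. \<lfloor>real Q * frac (real j * w $ i)\<rfloor>)" for j :: nat
  define B where "B = PiE (UNIV::'n set) (\<lambda>_. {0..int Q - 1})"
  have gB: "g ` {0..Q ^ CARD('n)} \<subseteq> B"
  proof
    fix f assume "f \<in> g ` {0..Q ^ CARD('n)}"
    then obtain j where f: "f = g j" by auto
    have "\<lfloor>real Q * frac (real j * w $ i)\<rfloor> \<in> {0..int Q - 1}" for i
    proof -
      have a: "0 \<le> frac (real j * w $ i)" "frac (real j * w $ i) < 1" by (auto simp: frac_lt_1)
      have "0 \<le> real Q * frac (real j * w $ i)" using a by simp
      moreover have "real Q * frac (real j * w $ i) < real Q" using a assms by simp
      ultimately show ?thesis by (auto simp: floor_less_iff)
    qed
    then show "f \<in> B" unfolding f B_def g_def by auto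
  qed
  have "card B = Q ^ CARD('n)" unfolding B_def using assms
    by (simp add: card_PiE)
  then have "card B < card {0..Q ^ CARD('n)}" by simp
  moreover have "finite B" unfolding B_def by (simp add: finite_PiE)
  ultimately have "\<not> inj_on g {0..Q ^ CARD('n)}"
    using card_inj_on_le[OF _ gB] by fastforce
  then obtain j1 j2 where j: "j1 \<in> {0..Q ^ CARD('n)}" "j2 \<in> {0..Q ^ CARD('n)}" "j1 < j2" "g j1 = g j2"
    unfolding inj_on_def by (metis linorder_neqE_nat)
  define q where "q = j2 - j1"
  define z :: "int ^ 'n" where "z = (\<chi> i. \<lfloor>real j2 * w $ i\<rfloor> - \<lfloor>real j1 * w $ i\<rfloor>)"
  have zq: "\<bar>real q * w $ i - of_int (z $ i)\<bar> < 1 / real Q" for i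
  proof -
    define a1 where "a1 = frac (real j1 * w $ i)"
    define a2 where "a2 = frac (real j2 * w $ i)"
    have fl: "\<lfloor>real Q * a1\<rfloor> = \<lfloor>real Q * a2\<rfloor>" using j(4) unfolding g_def a1_def a2_def
      by meson
    have "real Q * a1 < \<lfloor>real Q * a1\<rfloor> + 1" "\<lfloor>real Q * a1\<rfloor> \<le> real Q * a1"
      "real Q * a2 < \<lfloor>real Q * a2\<rfloor> + 1" "\<lfloor>real Q * a2\<rfloor> \<le> real Q * a2" by linarith+
    then have "\<bar>real Q * a2 - real Q * a1\<bar> < 1" using fl by linarith
    moreover have "\<bar>real Q * a2 - real Q * a1\<bar> = real Q * \<bar>a2 - a1\<bar>"
    proof -
      have "real Q * a2 - real Q * a1 = real Q * (a2 - a1)" by (simp add: algebra_simps)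
      then show ?thesis by (simp add: abs_mult)
    qed
    ultimately have d0: "real Q * \<bar>a2 - a1\<bar> < 1" by simp
    have Qp: "real Q > 0" using assms by simp
    have "\<bar>a2 - a1\<bar> = (real Q * \<bar>a2 - a1\<bar>) / real Q" using Qp by simp
    also have "\<dots> < 1 / real Q" by (rule divide_strict_right_mono[OF d0 Qp])
    finally have d: "\<bar>a2 - a1\<bar> < 1 / real Q" .
    have rq: "real q = real j2 - real j1" using j(3) by (simp add: q_def of_nat_diff)
    have "real q * w $ i - of_int (z $ i) = a2 - a1"
      unfolding rq z_def a1_def a2_def frac_def vec_lambda_beta
      by (simp only: left_diff_distrib of_int_diff)
    then show ?thesis using d by simp
  qed
  have "1 \<le> q" "q \<le> Q ^ CARD('n)" using j(1-3) unfolding q_def by auto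
  then show ?thesis using zq by blast
qed


lemma count_box:
  fixes lo hi :: real
  assumes "lo \<le> hi"
  shows "finite {z::int^'n::finite. \<forall>i. lo \<le> of_int (z$i) \<and> of_int (z$i) \<le> hi}"
    and "real (card {z::int^'n::finite. \<forall>i. lo \<le> of_int (z$i) \<and> of_int (z$i) \<le> hi})
           \<le> (hi - lo + 1) ^ CARD('n)"
proof -
  define Z where "Z = {z::int^'n::finite. \<forall>i. lo \<le> of_int (z$i) \<and> of_int (z$i) \<le> hi}"
  define P where "P = PiE (UNIV::'n set) (\<lambda>_. {\<lceil>lo\<rceil>..\<lfloor>hi\<rfloor>})"
  define h :: "('n \<Rightarrow> int) \<Rightarrow> int^'n" where "h f = (\<chi> i. f i)" for f
  have sub: "Z \<subseteq> h ` P"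
  proof
    fix z assume z: "z \<in> Z"
    have "(\<lambda>i. z $ i) \<in> P" using z unfolding Z_def P_def
      by (auto simp: ceiling_le_iff le_floor_iff)
    moreover have "z = h (\<lambda>i. z $ i)" unfolding h_def by simp
    ultimately show "z \<in> h ` P" by blast
  qed
  have fP: "finite P" unfolding P_def by (simp add: finite_PiE)
  then show "finite Z" using sub finite_surj by blast
  have "card Z \<le> card (h ` P)" using sub fP by (intro card_mono) auto
  also have "\<dots> \<le> card P" using fP by (rule card_image_le)
  also have "card P = nat (\<lfloor>hi\<rfloor> - \<lceil>lo\<rceil> + 1) ^ CARD('n)" unfolding P_def
    by (simp add: card_PiE)
  finally have c: "real (card Z) \<le> real (nat (\<lfloor>hi\<rfloor> - \<lceil>lo\<rceil> + 1)) ^ CARD('n)"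
    by (metis of_nat_le_iff of_nat_power)
  have "real (nat (\<lfloor>hi\<rfloor> - \<lceil>lo\<rceil> + 1)) \<le> hi - lo + 1"
  proof (cases "\<lfloor>hi\<rfloor> - \<lceil>lo\<rceil> + 1 \<ge> 0")
    case True
    then have "real (nat (\<lfloor>hi\<rfloor> - \<lceil>lo\<rceil> + 1)) = of_int \<lfloor>hi\<rfloor> - of_int \<lceil>lo\<rceil> + 1"
      by simp
    moreover have "of_int \<lfloor>hi\<rfloor> \<le> hi" "lo \<le> of_int \<lceil>lo\<rceil>" by auto
    ultimately show ?thesis by linarith
  next
    case False then show ?thesis using assms by simp
  qed
  then have "real (nat (\<lfloor>hi\<rfloor> - \<lceil>lo\<rceil> + 1)) ^ CARD('n) \<le> (hi - lo + 1) ^ CARD('n)"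
    by (intro power_mono) auto
  with c show "real (card Z) \<le> (hi - lo + 1) ^ CARD('n)" by linarith
qed


lemma powr_aux:
  fixes R \<sigma> m :: real assumes "R > 0" "R powr \<sigma> = m"
  shows "R powr (2*\<sigma> - 1) = m^2 / R" "R powr (\<sigma> - 1) = m / R"
proof -
  have e: "2*\<sigma> = \<sigma> + \<sigma>" by simp
  have "R powr (2*\<sigma> - 1) = R powr (\<sigma> + \<sigma>) / R powr 1" unfolding e by (rule powr_diff)
  also have "\<dots> = m^2 / R"
  proof -
    have "R powr (\<sigma> + \<sigma>) = m * m" using assms by (simp only: powr_add)
    moreover have "R powr 1 = R" using assms by simp
    ultimately show ?thesis by (simp add: power2_eq_square)
  qed
  finally show "R powr (2*\<sigma> - 1) = m^2 / R" .
  show "R powr (\<sigma> - 1) = m / R" using assms by (simp add: powr_diff)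
qed

lemma mem_S:
  fixes y :: "real^'n::finite" and z :: "int^'n" and q :: int and R m \<sigma> \<epsilon>2 :: real
  assumes R: "R > 0" and m: "m > 0" "R powr \<sigma> = m"
    and q1: "4 powr (- real CARD('n) - 1) * (R / m^2) < q" and q2: "q < R / m^2"
    and close: "norm (y - (R / (m * q)) *\<^sub>R (\<chi> i. real_of_int (z$i))) < \<epsilon>2"
    and y1: "R / 4 < norm y" and y2: "norm y < R / 2"
  shows "y \<in> {(R / t) *\<^sub>R x | x t. x \<in> (setX \<sigma> \<epsilon>2 R :: (real ^ 'n) set) \<and> t \<in> setT TYPE('n) \<sigma> R}
              \<inter> ball 0 R"
proof -
  define N where "N = real CARD('n)"
  define K where "K = R / m^2"
  have Kp: "K > 0" using R m by (simp add: K_def)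
  define t where "t = R powr (2 * \<sigma> - 1) * real_of_int q"
  have t: "t = q / K" unfolding t_def K_def using powr_aux[OF R m(2)] by simp
  have A: "4 powr (- N - 1) > 0" by simp
  have "0 < 4 powr (- real CARD('n) - 1) * K" using Kp by simp
  then have qp: "q > 0" using q1 unfolding K_def by linarith
  have t1: "4 powr (- N - 1) < t" using q1 Kp unfolding t N_def K_def[symmetric] by (simp add: pos_less_divide_eq)
  have t2: "t < 1" using q2 Kp unfolding t K_def[symmetric] by simp
  have tp: "t > 0" using t1 A by linarith
  have tT: "t \<in> setT TYPE('n) \<sigma> R" unfolding setT_def using t1 t2 N_def t_def by auto
  define zr :: "real^'n" where "zr = (\<chi> i. real_of_int (z$i))"
  define x where "x = (t / R) *\<^sub>R y"
  define b where "b = (t / R) *\<^sub>R (y - (R / (m * q)) *\<^sub>R zr)"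
  have coef: "(t / R) * (R / (m * q)) = m / R"
    unfolding t K_def using R m qp by (simp add: field_simps power2_eq_square)
  have xb: "x = (R powr (\<sigma> - 1)) *\<^sub>R zr + b"
    unfolding x_def b_def powr_aux(2)[OF R m(2)] using coef by (simp add: algebra_simps)
  have "norm b = (t / R) * norm (y - (R / (m * q)) *\<^sub>R zr)" unfolding b_def using tp R by simp
  also have "\<dots> < (1 / R) * \<epsilon>2"
  proof -
    have "t * norm (y - (R / (m * q)) *\<^sub>R zr) \<le> norm (y - (R / (m * q)) *\<^sub>R zr)"
      using t2 tp by (simp add: mult_left_le_one_le)
    then have "t * norm (y - (R / (m * q)) *\<^sub>R zr) < \<epsilon>2" using close unfolding zr_def by linarith
    then show ?thesis using R by (simp add: divide_strict_right_mono)
  qed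
  finally have nb: "norm b < \<epsilon>2 / R" by simp
  have zl: "zr \<in> int_lattice" unfolding int_lattice_def zr_def by simp
  have nx: "norm x = t / R * norm y" unfolding x_def using tp R by simp
  have nx1: "norm x > t / 4"
  proof -
    have "t / R * norm y > t / R * (R / 4)" using y1 tp R by (intro mult_strict_left_mono) auto
    then show ?thesis using nx R by simp
  qed
  have nx2: "norm x < t / 2"
  proof -
    have "t / R * norm y < t / R * (R / 2)" using y2 tp R by (intro mult_strict_left_mono) auto
    then show ?thesis using nx R by simp
  qed
  have "4 powr (- N - 1) = 4 powr ((- N - 2) + 1)" by (rule arg_cong[where f="\<lambda>u. 4 powr u"]) simp
  also have "\<dots> = 4 powr (- N - 2) * 4" by (subst powr_add) simp
  finally have "4 powr (- N - 2) = 4 powr (- N - 1) / 4" by simp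
  then have a1: "4 powr (- N - 2) < norm x" using nx1 t1 by simp
  have "1 \<le> sqrt N" unfolding N_def by simp
  then have a2: "norm x < 2 * sqrt N" using nx2 t2 by linarith
  have xX: "x \<in> setX \<sigma> \<epsilon>2 R" unfolding setX_def minkowski_sum_def annulus_def
    using xb zl nb a1 a2 unfolding N_def by auto
  have yx: "y = (R / t) *\<^sub>R x" unfolding x_def using R tp by simp
  have "norm y < R" using y2 R by simp
  then show ?thesis using xX tT yx by auto
qed


lemma open_S:
  fixes R \<sigma> \<epsilon>2 :: real
  assumes R: "R > 0"
  shows "open ({(R / t) *\<^sub>R x | x t. x \<in> (setX \<sigma> \<epsilon>2 R :: (real ^ 'n::finite) set) \<and> t \<in> setT TYPE('n) \<sigma> R}
              \<inter> ball 0 R)"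
proof -
  have ms: "minkowski_sum L (ball 0 r) = (\<Union>a\<in>L. ball a r)" for L :: "(real^'n) set" and r
  proof (rule set_eqI, rule iffI)
    fix x assume "x \<in> minkowski_sum L (ball 0 r)"
    then obtain a b where "x = a + b" "a \<in> L" "norm b < r" unfolding minkowski_sum_def by auto
    note h = this
    have "dist a x = norm b" unfolding h(1) dist_norm by simp
    then have "x \<in> ball a r" using h(3) by simp
    then show "x \<in> (\<Union>a\<in>L. ball a r)" using h(2) by blast
  next
    fix x assume "x \<in> (\<Union>a\<in>L. ball a r)"
    then obtain a where "a \<in> L" "dist a x < r" by auto
    then show "x \<in> minkowski_sum L (ball 0 r)" unfolding minkowski_sum_def
      by (intro CollectI exI[of _ a] exI[of _ "x - a"]) (auto simp: dist_norm norm_minus_commute)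
  qed
  have oa: "open (annulus u v :: (real^'n) set)" for u v
  proof -
    have "annulus u v = {x::real^'n. u < norm x} \<inter> {x. norm x < v}" unfolding annulus_def by auto
    then show ?thesis by (auto intro!: open_Int open_Collect_less continuous_intros)
  qed
  have oX: "open (setX \<sigma> \<epsilon>2 R :: (real^'n) set)" unfolding setX_def ms
    by (intro open_Int oa open_UN) auto
  have Tpos: "t > 0" if "t \<in> setT TYPE('n) \<sigma> R" for t
  proof -
    have "t > 4 powr (- real CARD('n) - 1)" using that unfolding setT_def by auto
    moreover have "4 powr (- real CARD('n) - 1) > 0" by simp
    ultimately show ?thesis by linarith
  qed
  have eq: "{(R / t) *\<^sub>R x | x t. x \<in> (setX \<sigma> \<epsilon>2 R :: (real ^ 'n) set) \<and> t \<in> setT TYPE('n) \<sigma> R}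
     = (\<Union>t\<in>setT TYPE('n) \<sigma> R. (\<lambda>x. (R / t) *\<^sub>R x) ` setX \<sigma> \<epsilon>2 R)" by auto
  have "open (\<Union>t\<in>setT TYPE('n) \<sigma> R. (\<lambda>x. (R / t) *\<^sub>R x) ` (setX \<sigma> \<epsilon>2 R :: (real^'n) set))"
  proof (rule open_UN, rule ballI)
    fix t assume "t \<in> setT TYPE('n) \<sigma> R"
    then have "R / t \<noteq> 0" using Tpos R by auto
    then show "open ((\<lambda>x. (R / t) *\<^sub>R x) ` (setX \<sigma> \<epsilon>2 R :: (real^'n) set))"
      using open_scaling[OF _ oX] by auto
  qed
  then show ?thesis unfolding eq by (intro open_Int) auto
qed


lemma K_bound:
  fixes R \<sigma> m :: real and N :: nat
  assumes R: "R > 0" and m: "m > 0" and s: "\<sigma> > 0" and Rm: "R powr \<sigma> = m"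
  shows "R / m^2 = m powr (1/\<sigma> - 2 - real N) * m ^ N"
proof -
  have "R = (R powr \<sigma>) powr (1/\<sigma>)" using R s by (simp add: powr_powr)
  then have R': "R = m powr (1/\<sigma>)" using Rm by simp
  have "m powr (1/\<sigma> - 2 - real N) * m ^ N = m powr (1/\<sigma> - 2 - real N) * m powr (real N)"
    using m by (simp add: powr_realpow)
  also have "\<dots> = m powr (1/\<sigma> - 2)" using m by (simp add: powr_add[symmetric])
  also have "\<dots> = m powr (1/\<sigma>) / m powr 2" using m by (simp add: powr_diff)
  also have "\<dots> = R / m^2"
  proof -
    have "m powr 2 = m^2" using m by (simp add: powr_numeral)
    then show ?thesis using R' by simp
  qed
  finally show ?thesis by simp
qed

lemma choose_Q:
  fixes K d :: real and N :: nat
  assumes "N \<ge> 1" "d \<ge> 1" "K \<ge> 2 * d ^ N"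
  shows "\<exists>Q::nat. Q \<ge> 1 \<and> real Q > d - 1 \<and> 2 * real Q ^ N \<le> K \<and> K < 2 ^ (N+1) * real Q ^ N"
proof -
  have "1 \<le> d ^ N" using assms(2) by (rule one_le_power)
  then have Kp: "K / 2 > 0" using assms(3) by linarith
  define u where "u = (K/2) powr (1 / real N)"
  have uN: "u ^ N = K / 2" unfolding u_def using Kp assms(1)
    by (simp add: powr_realpow[symmetric] powr_powr)
  have up: "u > 0" unfolding u_def using Kp by simp
  have "d ^ N \<le> u ^ N" using uN assms by simp
  then have du: "d \<le> u" using up assms(1,2) by (subst (asm) power_mono_iff) auto
  define Q where "Q = nat \<lfloor>u\<rfloor>"
  have Qu: "real Q \<le> u" "u < real Q + 1" unfolding Q_def using up by linarith+
  have Q1: "Q \<ge> 1" unfolding Q_def using du assms(2) by linarith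
  have "real Q ^ N \<le> u ^ N" using Qu by (intro power_mono) auto
  then have a: "2 * real Q ^ N \<le> K" using uN by simp
  have "u ^ N < (real Q + 1) ^ N" using Qu up assms(1) by (intro power_strict_mono) auto
  also have "\<dots> \<le> (2 * real Q) ^ N" using Q1 by (intro power_mono) auto
  also have "\<dots> = 2^N * real Q ^ N" by (simp add: power_mult_distrib)
  finally have "K < 2^(N+1) * real Q ^ N" using uN by simp
  moreover have "real Q > d - 1" using Qu du by linarith
  ultimately show ?thesis using Q1 a by blast
qed


lemma perq_alg:
  fixes t p s Q :: real assumes "t * p = 1 / Q"
  shows "(t * s + 2 * (1 / Q) + 1) * (2 * p) = 2 * s / Q + 4 * (p / Q) + 2 * p"
proof -
  have "(t * s + 2 * (1 / Q) + 1) * (2 * p) = 2 * s * (t * p) + 4 * (p / Q) + 2 * p"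
    by (simp add: algebra_simps)
  then show ?thesis using assms by simp
qed

lemma core:
  fixes \<sigma> \<epsilon>2 R :: real and m :: nat
  assumes N2: "CARD('n::finite) \<ge> 2"
    and s0: "\<sigma> > 0" and e: "\<epsilon>2 > 0" and R: "R > 0" and Rm: "R powr \<sigma> = real m"
    and m1: "real m \<ge> 1"
    and mg: "real m powr (1/\<sigma> - 2 - real CARD('n))
               \<ge> 2 * (real CARD('n) * 4 powr (real CARD('n) + 1) / \<epsilon>2 + 1) ^ CARD('n)"
    and mb: "real m \<ge> 2 ^ CARD('n) * 42 * sqrt (real CARD('n))"
  shows "ennreal ((1 / (7 * sqrt (real CARD('n)))) ^ CARD('n) / 4 * R ^ CARD('n))
     \<le> emeasure lebesgue ({(R / t) *\<^sub>R x | x t. x \<in> (setX \<sigma> \<epsilon>2 R :: (real ^ 'n) set) \<and> t \<in> setT TYPE('n) \<sigma> R}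
              \<inter> ball 0 R)"
proof -
  define N where "N = CARD('n)"
  define Nr where "Nr = real N"
  define mr where "mr = real m"
  define A where "A = (4::real) powr (Nr + 1)"
  define D where "D = Nr * A / \<epsilon>2 + 1"
  define K where "K = R / mr^2"
  define r where "r = R / mr"
  define S where "S = ({(R / t) *\<^sub>R x | x t. x \<in> (setX \<sigma> \<epsilon>2 R :: (real ^ 'n) set) \<and> t \<in> setT TYPE('n) \<sigma> R}
              \<inter> ball 0 R)"
  have N1: "N \<ge> 1" "Nr \<ge> 1" using N2 unfolding N_def Nr_def by auto
  have mp: "mr > 0" using m1 unfolding mr_def by simp
  have rp: "r > 0" unfolding r_def using R mp by simp
  have Kr: "K = r / mr" unfolding K_def r_def by (simp add: power2_eq_square)
  have Kp: "K > 0" using rp mp Kr by simp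
  have A_eq: "A = 2 ^ (2 * N + 2)"
  proof -
    have "Nr + 1 = real (N + 1)" unfolding Nr_def by simp
    then have "A = 4 powr real (N + 1)" unfolding A_def by (rule arg_cong)
    also have "\<dots> = 4 ^ (N + 1)" by (rule powr_realpow) simp
    also have "\<dots> = ((2::real) ^ 2) ^ (N + 1)" by simp
    also have "\<dots> = 2 ^ (2 * (N + 1))" by (simp only: power_mult)
    also have "\<dots> = 2 ^ (2 * N + 2)" by simp
    finally show ?thesis .
  qed
  have Ap: "A > 0" unfolding A_def by simp
  have Ainv: "4 powr (- real CARD('n) - 1) = 1 / A"
  proof -
    have h: "- real CARD('n) - 1 = - (Nr + 1)" unfolding Nr_def N_def by simp
    have "(4::real) powr (- real CARD('n) - 1) = 4 powr (- (Nr+1))" using h by (rule arg_cong)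
    also have "\<dots> = inverse A" unfolding A_def by (rule powr_minus)
    finally show ?thesis by (simp add: inverse_eq_divide)
  qed
  have D1: "D \<ge> 1" unfolding D_def using e Ap N1 by simp
  have K_ge: "K \<ge> 2 * (D * mr) ^ N"
  proof -
    have "K = mr powr (1/\<sigma> - 2 - real N) * mr ^ N"
      unfolding K_def using K_bound[OF R mp s0] Rm mr_def by simp
    moreover have "mr powr (1/\<sigma> - 2 - real N) \<ge> 2 * D ^ N"
      using mg unfolding D_def A_def Nr_def N_def mr_def by simp
    ultimately show ?thesis using mp by (simp add: power_mult_distrib mult_right_mono)
  qed
  have Dm1: "D * mr \<ge> 1" using D1 m1 unfolding mr_def by (metis mult_mono' one_le_numeral order.trans mult_1 zero_le_one)
  obtain Q :: nat where Q1: "Q \<ge> 1" and Qd: "real Q > D * mr - 1" and QK: "2 * real Q ^ N \<le> K"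
    and KQ: "K < 2 ^ (N + 1) * real Q ^ N"
    using choose_Q[OF N1(1) Dm1 K_ge] by blast
  have Qr: "real Q > Nr * A * mr / \<epsilon>2"
  proof -
    have "D * mr - 1 = Nr * A * mr / \<epsilon>2 + (mr - 1)" unfolding D_def by (simp add: algebra_simps)
    then show ?thesis using Qd m1 unfolding mr_def by linarith
  qed
  define s where "s = R / (7 * sqrt Nr)"
  have sp: "s > 0" unfolding s_def using R N1 by simp
  define a where "a = 2 * s"
  define b where "b = 3 * s"
  define C where "C = cbox ((\<chi> i. a)::real^'n) (\<chi> i. b)"
  define Qmax where "Qmax = nat \<lfloor>K / A\<rfloor>"
  define \<rho> where "\<rho> q = r / (real q * real Q)" for q :: nat
  define lo where "lo q = (real q / r) * (a - \<rho> q)" for q :: nat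
  define hi where "hi q = (real q / r) * (b + \<rho> q)" for q :: nat
  define Z where "Z q = {z::int^'n. \<forall>i. lo q \<le> of_int (z$i) \<and> of_int (z$i) \<le> hi q}" for q :: nat
  define cube where "cube q z = cbox ((\<chi> i. r / real q * of_int (z$i) - \<rho> q)::real^'n)
                                       (\<chi> i. r / real q * of_int (z$i) + \<rho> q)" for q :: nat and z :: "int^'n"
  define Bad where "Bad = (\<Union>q\<in>{1..Qmax}. \<Union>z\<in>Z q. cube q z)"
  define G where "G = C - Bad"
  have GS: "G \<subseteq> S"
  proof
    fix y assume yG: "y \<in> G"
    then have yC: "\<And>i. a \<le> y $ i \<and> y $ i \<le> b" unfolding G_def C_def by (auto simp: mem_box_cart)
    have ynB: "y \<notin> Bad" using yG unfolding G_def by auto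
    obtain q z where q1: "1 \<le> q" and qQ: "q \<le> Q ^ CARD('n)"
      and zq: "\<And>i. \<bar>real q * ((1/r) *\<^sub>R y) $ i - of_int (z $ i)\<bar> < 1 / real Q"
      using dirichlet[OF Q1, of "(1/r) *\<^sub>R y"] by blast
    have qp: "real q > 0" using q1 by simp
    have coord: "\<bar>y $ i - r / real q * of_int (z $ i)\<bar> < \<rho> q" for i
    proof -
      have yi: "((1/r) *\<^sub>R y) $ i = y $ i / r" by simp
      have "y $ i - r / real q * of_int (z $ i) = (r / real q) * (real q * ((1/r) *\<^sub>R y) $ i - of_int (z $ i))"
        unfolding yi using rp qp by (simp add: right_diff_distrib)
      then have "\<bar>y $ i - r / real q * of_int (z $ i)\<bar> = (r / real q) * \<bar>real q * ((1/r) *\<^sub>R y) $ i - of_int (z $ i)\<bar>"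
        using rp qp by (simp add: abs_mult)
      also have "\<dots> < (r / real q) * (1 / real Q)" using zq[of i] rp qp by (intro mult_strict_left_mono) auto
      also have "\<dots> = \<rho> q" unfolding \<rho>_def by simp
      finally show ?thesis .
    qed
    have zZ: "z \<in> Z q"
    proof -
      have "lo q \<le> of_int (z$i) \<and> of_int (z$i) \<le> hi q" for i
      proof -
        have c1: "a - \<rho> q \<le> r / real q * of_int (z $ i)" using coord[of i] yC[of i] by linarith
        have c2: "r / real q * of_int (z $ i) \<le> b + \<rho> q" using coord[of i] yC[of i] by linarith
        have e1: "real q / r * (r / real q * of_int (z $ i)) = of_int (z $ i)" using rp qp by simp
        have "lo q \<le> of_int (z$i)" unfolding lo_def using mult_left_mono[OF c1, of "real q / r"] rp qp e1 by simp
        moreover have "of_int (z$i) \<le> hi q" unfolding hi_def using mult_left_mono[OF c2, of "real q / r"] rp qp e1 by simp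
        ultimately show ?thesis ..
      qed
      then show ?thesis unfolding Z_def by blast
    qed
    have yc: "y \<in> cube q z" unfolding cube_def mem_box_cart vec_lambda_beta
    proof (intro allI conjI)
      fix i
      have "- \<rho> q < y $ i - r / real q * of_int (z $ i) \<and> y $ i - r / real q * of_int (z $ i) < \<rho> q"
        using coord[of i] by (simp add: abs_less_iff)
      then show "r / real q * of_int (z $ i) - \<rho> q \<le> y $ i" "y $ i \<le> r / real q * of_int (z $ i) + \<rho> q"
        by linarith+
    qed
    have qbig: "real q > K / A"
    proof (rule ccontr)
      assume "\<not> real q > K / A"
      then have "of_int (int q) \<le> K / A" by simp
      then have "int q \<le> \<lfloor>K / A\<rfloor>" by (simp only: le_floor_iff)
      then have "q \<le> Qmax" unfolding Qmax_def by linarith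
      then have "q \<in> {1..Qmax}" using q1 by simp
      then have "y \<in> Bad" unfolding Bad_def using zZ yc by (intro UN_I) auto
      then show False using ynB by simp
    qed
    have qsmall: "real q < K"
    proof -
      have "real q \<le> real Q ^ N" using qQ unfolding N_def by (metis of_nat_le_iff of_nat_power)
      moreover have "real Q ^ N > 0" using Q1 by simp
      ultimately show ?thesis using QK by linarith
    qed
    have nc: "norm (y - (R / (mr * real_of_int (int q))) *\<^sub>R (\<chi> i. real_of_int (z$i))) < \<epsilon>2"
    proof -
      have eqv: "y - (R / (mr * real_of_int (int q))) *\<^sub>R (\<chi> i. real_of_int (z$i))
                 = (\<chi> i. y $ i - r / real q * of_int (z $ i))"
        unfolding r_def by (simp add: vec_eq_iff)
      have "norm (\<chi> i. y $ i - r / real q * of_int (z $ i)) \<le> (\<Sum>i\<in>UNIV. \<bar>y $ i - r / real q * of_int (z $ i)\<bar>)"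
        using norm_le_l1_cart by (metis (no_types, lifting) sum.cong vec_lambda_beta)
      also have "\<dots> \<le> (\<Sum>i\<in>(UNIV::'n set). \<rho> q)" using coord by (intro sum_mono less_imp_le) auto
      also have "\<dots> = Nr * \<rho> q" unfolding Nr_def N_def by simp
      also have "\<dots> < \<epsilon>2"
      proof -
        have QA: "real Q > 0" using Q1 by simp
        have "\<rho> q = r / (real q * real Q)" unfolding \<rho>_def ..
        also have "\<dots> < r / ((K / A) * real Q)"
          using qbig QA Kp Ap rp qp by (intro divide_strict_left_mono mult_strict_right_mono) (auto intro!: mult_pos_pos divide_pos_pos)
        also have "\<dots> = A * mr / real Q" unfolding Kr using rp mp Ap QA by (simp add: field_simps)
        finally have rl: "\<rho> q < A * mr / real Q" .
        have "Nr * \<rho> q < Nr * (A * mr / real Q)" using N1 by (intro mult_strict_left_mono[OF rl]) auto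
        also have "\<dots> < \<epsilon>2"
        proof -
          have "Nr * A * mr < \<epsilon>2 * real Q" using Qr e by (simp add: field_simps)
          then show ?thesis using QA by (simp add: field_simps)
        qed
        finally show ?thesis .
      qed
      finally show ?thesis unfolding eqv .
    qed
    have nsq: "norm y = sqrt (\<Sum>i\<in>UNIV. (y $ i)^2)" by (simp add: norm_vec_def L2_set_def)
    have sumlo: "(\<Sum>i\<in>(UNIV::'n set). (y $ i)^2) \<ge> Nr * a^2"
    proof -
      have "(\<Sum>i\<in>(UNIV::'n set). a^2) \<le> (\<Sum>i\<in>UNIV. (y $ i)^2)"
        using yC sp unfolding a_def by (intro sum_mono power_mono) auto
      then show ?thesis unfolding Nr_def N_def by simp
    qed
    have sumhi: "(\<Sum>i\<in>(UNIV::'n set). (y $ i)^2) \<le> Nr * b^2"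
    proof -
      have "(\<Sum>i\<in>UNIV. (y $ i)^2) \<le> (\<Sum>i\<in>(UNIV::'n set). b^2)"
        using yC sp unfolding a_def by (intro sum_mono power_mono) (auto, smt (verit) sp)
      then show ?thesis unfolding Nr_def N_def by simp
    qed
    have sq: "Nr * s^2 = R^2 / 49" unfolding s_def using N1 by (simp add: power_divide power_mult_distrib)
    have y1: "R / 4 < norm y"
    proof -
      have "Nr * a^2 = 4 * (Nr * s^2)" unfolding a_def by (simp add: power_mult_distrib)
      then have "Nr * a^2 = 4 * (R^2/49)" using sq by simp
      moreover have "(R/4)^2 = R^2/16" by (simp add: power_divide)
      moreover have "R^2 > 0" using R by simp
      ultimately have "(R/4)^2 < (\<Sum>i\<in>UNIV. (y $ i)^2)" using sumlo by linarith
      then show ?thesis unfolding nsq by (rule real_less_rsqrt)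
    qed
    have y2: "norm y < R / 2"
    proof -
      have "Nr * b^2 = 9 * (Nr * s^2)" unfolding b_def by (simp add: power_mult_distrib)
      then have "Nr * b^2 = 9 * (R^2/49)" using sq by simp
      moreover have "(R/2)^2 = R^2/4" by (simp add: power_divide)
      moreover have "R^2 > 0" using R by simp
      ultimately have "(\<Sum>i\<in>UNIV. (y $ i)^2) < (R/2)^2" using sumhi by linarith
      then have "sqrt (\<Sum>i\<in>UNIV. (y $ i)^2) < sqrt ((R/2)^2)" by (rule real_sqrt_less_mono)
      then show ?thesis unfolding nsq using R by simp
    qed
    have q1': "4 powr (- real CARD('n) - 1) * (R / mr^2) < real_of_int (int q)"
      using qbig unfolding Ainv K_def by (simp add: mult.commute)
    have q2': "real_of_int (int q) < R / mr^2" using qsmall unfolding K_def by simp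
    show "y \<in> S" unfolding S_def
      using mem_S[OF R mp, where q="int q" and z=z and y=y and \<sigma>=\<sigma>] Rm q1' q2' nc y1 y2 unfolding mr_def by simp
  qed
  have ab: "a \<le> b" unfolding a_def b_def using sp by simp
  have QA: "real Q > 0" using Q1 by simp
  have \<rho>p: "\<rho> q > 0" if "q \<ge> 1" for q using that rp QA unfolding \<rho>_def by simp
  have Cm: "C \<in> lmeasurable" unfolding C_def by simp
  have mC: "measure lebesgue C = s ^ N"
  proof -
    have ne: "cbox ((\<chi> i. a)::real^'n) (\<chi> i. b) \<noteq> {}"
    proof -
      have "((\<chi> i. a)::real^'n) \<in> cbox (\<chi> i. a) (\<chi> i. b)" using ab by (simp add: mem_box_cart)
      then show ?thesis by blast
    qed
    have "measure lebesgue C = Henstock_Kurzweil_Integration.content C" unfolding C_def by simp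
    also have "\<dots> = (\<Prod>i\<in>(UNIV::'n set). b - a)" unfolding C_def using content_cbox_cart[OF ne] by simp
    also have "\<dots> = s ^ N" unfolding N_def a_def b_def by simp
    finally show ?thesis .
  qed
  have cube_m: "cube q z \<in> lmeasurable" for q z unfolding cube_def by simp
  have mcube: "measure lebesgue (cube q z) = (2 * \<rho> q) ^ N" if "q \<ge> 1" for q z
  proof -
    have ne: "cube q z \<noteq> {}"
    proof -
      have "((\<chi> i. r / real q * of_int (z$i))::real^'n) \<in> cube q z"
        using \<rho>p[OF that] unfolding cube_def by (simp add: mem_box_cart)
      then show ?thesis by blast
    qed
    have "measure lebesgue (cube q z) = Henstock_Kurzweil_Integration.content (cube q z)" unfolding cube_def by simp
    also have "\<dots> = (\<Prod>i\<in>(UNIV::'n set). 2 * \<rho> q)" using content_cbox_cart[OF ne[unfolded cube_def]]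
      unfolding cube_def by simp
    also have "\<dots> = (2 * \<rho> q) ^ N" unfolding N_def by simp
    finally show ?thesis .
  qed
  have lohi: "lo q \<le> hi q" if "q \<ge> 1" for q
  proof -
    have "a - \<rho> q \<le> b + \<rho> q" using ab \<rho>p[OF that] by simp
    then show ?thesis unfolding lo_def hi_def using rp that by (intro mult_left_mono) auto
  qed
  have finZ: "finite (Z q)" if "q \<ge> 1" for q unfolding Z_def using count_box(1)[OF lohi[OF that]] .
  have cardZ: "real (card (Z q)) \<le> (hi q - lo q + 1) ^ N" if "q \<ge> 1" for q
    unfolding Z_def N_def using count_box(2)[OF lohi[OF that]] .
  define X1 where "X1 = (2 / real Q) * (s + 3 * r)"
  have perq: "(hi q - lo q + 1) * (2 * \<rho> q) \<le> X1" if q1: "q \<ge> 1" for q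
  proof -
    have qp: "real q \<ge> 1" using q1 by simp
    have e1: "real q / r * \<rho> q = 1 / real Q" unfolding \<rho>_def using rp QA qp by (simp add: field_simps)
    have "hi q - lo q = real q / r * s + 2 * (real q / r * \<rho> q)"
      unfolding hi_def lo_def a_def b_def by (simp add: algebra_simps)
    then have h: "hi q - lo q + 1 = real q / r * s + 2 * (1 / real Q) + 1" using e1 by simp
    have "(hi q - lo q + 1) * (2 * \<rho> q) = 2 * s / real Q + 4 * (\<rho> q / real Q) + 2 * \<rho> q"
      unfolding h by (rule perq_alg[OF e1])
    also have "\<dots> \<le> 2 * s / real Q + 4 * (r / real Q) + 2 * (r / real Q)"
    proof -
      have r1: "\<rho> q \<le> r / real Q"
      proof -
        have "real q * real Q \<ge> 1 * real Q" using qp QA by (intro mult_right_mono) auto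
        then have "r / (real q * real Q) \<le> r / (1 * real Q)" using rp QA by (intro divide_left_mono) auto
        then show ?thesis unfolding \<rho>_def by simp
      qed
      have r2: "\<rho> q / real Q \<le> \<rho> q" using \<rho>p[OF q1] Q1 by (simp add: divide_le_eq)
      show ?thesis using r1 r2 by linarith
    qed
    also have "\<dots> = X1" unfolding X1_def by (simp add: add_divide_distrib algebra_simps)
    finally show ?thesis .
  qed
  have X1p: "X1 \<ge> 0" unfolding X1_def using QA sp rp by simp
  have mUq: "measure lebesgue (\<Union>z\<in>Z q. cube q z) \<le> X1 ^ N" if q1: "q \<ge> 1" for q
  proof -
    have "measure lebesgue (\<Union>z\<in>Z q. cube q z) \<le> (\<Sum>z\<in>Z q. measure lebesgue (cube q z))"
      using finZ[OF q1] cube_m by (intro measure_UNION_le) auto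
    also have "\<dots> = real (card (Z q)) * (2 * \<rho> q) ^ N" using mcube[OF q1] by simp
    also have "\<dots> \<le> (hi q - lo q + 1) ^ N * (2 * \<rho> q) ^ N"
      using cardZ[OF q1] \<rho>p[OF q1] by (intro mult_right_mono) auto
    also have "\<dots> = ((hi q - lo q + 1) * (2 * \<rho> q)) ^ N" by (simp add: power_mult_distrib)
    also have "\<dots> \<le> X1 ^ N"
    proof (rule power_mono[OF perq[OF q1]])
      have "hi q - lo q + 1 \<ge> 0" using lohi[OF q1] by simp
      then show "0 \<le> (hi q - lo q + 1) * (2 * \<rho> q)" using \<rho>p[OF q1] by simp
    qed
    finally show ?thesis .
  qed
  have Bad_m: "Bad \<in> lmeasurable" unfolding Bad_def
    using finZ cube_m by (intro fmeasurable.finite_UN) auto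
  have mBad0: "measure lebesgue Bad \<le> real Qmax * X1 ^ N"
  proof -
    have "measure lebesgue Bad \<le> (\<Sum>q\<in>{1..Qmax}. measure lebesgue (\<Union>z\<in>Z q. cube q z))"
      unfolding Bad_def using finZ cube_m by (intro measure_UNION_le fmeasurableD fmeasurable.finite_UN) auto
    also have "\<dots> \<le> (\<Sum>q\<in>{1..Qmax}. X1 ^ N)" using mUq by (intro sum_mono) auto
    also have "\<dots> = real Qmax * X1 ^ N" by simp
    finally show ?thesis .
  qed
  have QmaxK: "real Qmax \<le> K / A"
  proof -
    have "K / A \<ge> 0" using Kp Ap by simp
    then show ?thesis unfolding Qmax_def by linarith
  qed
  have half: "K / A * (2 / real Q) ^ N \<le> 1 / 2"
  proof -
    have "K / A * (2 / real Q) ^ N = K * 2 ^ N / (A * real Q ^ N)" by (simp add: power_divide)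
    also have "\<dots> \<le> 2 ^ (N + 1) * real Q ^ N * 2 ^ N / (A * real Q ^ N)"
      using KQ Ap QA by (intro divide_right_mono mult_right_mono) auto
    also have "\<dots> = 1 / 2" unfolding A_eq using QA by (simp add: field_simps power_add mult_2_right)
    finally show ?thesis .
  qed
  have x_def': "3 * r = (21 * sqrt Nr / mr) * s"
    unfolding r_def s_def using mp N1 R by (simp add: field_simps)
  define x where "x = 21 * sqrt Nr / mr"
  have x0: "x \<ge> 0" unfolding x_def using mp N1 by simp
  have x2: "2 ^ N * x \<le> 1 / 2"
  proof -
    have "2 ^ N * (21 * sqrt Nr) \<le> mr / 2" using mb unfolding mr_def Nr_def N_def by simp
    then show ?thesis unfolding x_def using mp by (simp add: field_simps)
  qed
  have x1: "x \<le> 1"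
  proof -
    have "(1::real) \<le> 2 ^ N" by simp
    then have "x \<le> 2 ^ N * x" using x0 by (simp add: mult_le_cancel_right1)
    then show ?thesis using x2 by linarith
  qed
  have sX: "(s + 3 * r) ^ N \<le> 3 / 2 * s ^ N"
  proof -
    have "s + 3 * r = s * (1 + x)" unfolding x_def' x_def by (simp add: algebra_simps)
    then have "(s + 3 * r) ^ N = s ^ N * (1 + x) ^ N" by (simp add: power_mult_distrib)
    also have "\<dots> \<le> s ^ N * (3 / 2)"
    proof (rule mult_left_mono)
      show "(1 + x) ^ N \<le> 3 / 2" using pow_le_lin[OF x0 x1, of N] x2 by linarith
    qed (use sp in simp)
    finally show ?thesis by simp
  qed
  have mBad: "measure lebesgue Bad \<le> 3 / 4 * s ^ N"
  proof -
    have "real Qmax * X1 ^ N \<le> K / A * X1 ^ N" using QmaxK X1p by (intro mult_right_mono) auto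
    also have "\<dots> = K / A * (2 / real Q) ^ N * (s + 3 * r) ^ N"
    proof -
      have "X1 ^ N = (2 / real Q) ^ N * (s + 3 * r) ^ N" unfolding X1_def by (rule power_mult_distrib)
      then show ?thesis by (simp only: mult.assoc)
    qed
    also have "\<dots> \<le> 1 / 2 * (3 / 2 * s ^ N)"
      using half sX Kp Ap sp rp by (intro mult_mono) auto
    finally show ?thesis using mBad0 by simp
  qed
  have Gm: "G \<in> lmeasurable" unfolding G_def using Cm Bad_m by (intro fmeasurable_Diff fmeasurableD)
  have mG: "measure lebesgue G \<ge> s ^ N / 4"
  proof -
    have "measure lebesgue C - measure lebesgue Bad \<le> measure lebesgue G"
      unfolding G_def by (rule measure_diff_le_measure_setdiff[OF Cm Bad_m])
    then show ?thesis using mC mBad by simp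
  qed
  have sN: "s ^ N = (1 / (7 * sqrt Nr)) ^ N * R ^ N" unfolding s_def by (simp add: power_divide)
  have Sm: "S \<in> sets lebesgue"
  proof -
    have "bounded S" unfolding S_def by (simp add: bounded_Int)
    moreover have "open S" unfolding S_def by (rule open_S[OF R])
    ultimately show ?thesis by (intro fmeasurableD lmeasurable_open)
  qed
  have "ennreal ((1 / (7 * sqrt Nr)) ^ N / 4 * R ^ N) \<le> ennreal (measure lebesgue G)"
    using mG sN by (intro ennreal_leI) simp
  also have "\<dots> = emeasure lebesgue G" using Gm by (simp add: emeasure_eq_measure2)
  also have "\<dots> \<le> emeasure lebesgue S" using GS Sm by (rule emeasure_mono)
  finally show ?thesis unfolding S_def Nr_def N_def .
qed
theorem proposition3p2:
  fixes \<sigma> \<epsilon>2 :: real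
  assumes "CARD('n::finite) \<ge> 2"
    and "0 < \<sigma>" and "\<sigma> < 1 / (real CARD('n) + 2)"
    and "\<epsilon>2 > 0"
  shows "\<exists>c>0. \<exists>M::nat. \<forall>R>0. \<forall>m::nat. m \<ge> M \<and> R powr \<sigma> = real m \<longrightarrow>
           emeasure lebesgue
             ({(R / t) *\<^sub>R x | x t. x \<in> (setX \<sigma> \<epsilon>2 R :: (real ^ 'n) set) \<and> t \<in> setT TYPE('n) \<sigma> R}
              \<inter> ball 0 R)
           \<ge> ennreal (c * R ^ CARD('n))"
proof -
  define N where "N = CARD('n)"
  define Nr where "Nr = real N"
  define c where "c = (1 / (7 * sqrt Nr)) ^ N / 4"
  define \<gamma> where "\<gamma> = 1 / \<sigma> - 2 - Nr"
  define B1 where "B1 = 2 * (Nr * 4 powr (Nr + 1) / \<epsilon>2 + 1) ^ N"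
  define M where "M = nat \<lceil>max (max 1 (B1 powr (1 / \<gamma>))) (2 ^ N * 42 * sqrt Nr)\<rceil>"
  have N1: "Nr \<ge> 1" unfolding Nr_def N_def using assms(1) by simp
  have cp: "c > 0" unfolding c_def using N1 by simp
  have gp: "\<gamma> > 0"
  proof -
    have "\<sigma> * (Nr + 2) < 1" using assms(2,3) N1 unfolding Nr_def N_def by (simp add: field_simps)
    then have "Nr + 2 < 1 / \<sigma>" using assms(2) by (simp add: field_simps)
    then show ?thesis unfolding \<gamma>_def by simp
  qed
  have B1p: "B1 > 0" unfolding B1_def using N1 assms(4) by (simp add: add_pos_nonneg)
  have main: "ennreal (c * R ^ N) \<le> emeasure lebesgue
             ({(R / t) *\<^sub>R x | x t. x \<in> (setX \<sigma> \<epsilon>2 R :: (real ^ 'n) set) \<and> t \<in> setT TYPE('n) \<sigma> R}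
              \<inter> ball 0 R)" if R: "R > 0" and mM: "m \<ge> M" and Rm: "R powr \<sigma> = real m" for R m
  proof -
    have mge: "real m \<ge> max (max 1 (B1 powr (1 / \<gamma>))) (2 ^ N * 42 * sqrt Nr)"
      using mM unfolding M_def by linarith
    then have m1: "real m \<ge> 1" and mB: "real m \<ge> B1 powr (1 / \<gamma>)" and mb: "real m \<ge> 2 ^ N * 42 * sqrt Nr"
      by auto
    have "B1 = (B1 powr (1 / \<gamma>)) powr \<gamma>" using B1p gp by (simp add: powr_powr)
    also have "\<dots> \<le> real m powr \<gamma>" using mB gp by (intro powr_mono2) auto
    finally have mg: "B1 \<le> real m powr \<gamma>" .
    have "ennreal ((1 / (7 * sqrt (real CARD('n)))) ^ CARD('n) / 4 * R ^ CARD('n))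
     \<le> emeasure lebesgue ({(R / t) *\<^sub>R x | x t. x \<in> (setX \<sigma> \<epsilon>2 R :: (real ^ 'n) set) \<and> t \<in> setT TYPE('n) \<sigma> R}
              \<inter> ball 0 R)"
      by (rule core[OF assms(1) assms(2) assms(4) R Rm m1 mg[unfolded B1_def \<gamma>_def Nr_def N_def]
                mb[unfolded Nr_def N_def]])
    then show ?thesis unfolding c_def Nr_def N_def by simp
  qed
  show ?thesis
    using cp main unfolding N_def by blast
qed
end
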